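(* Let $\Sigma$ be a finite alphabet and $f,f'\in H_\Sigma$ forests. Then: (1) no two distinct sibling nodes in $\Psi(f)$ carry the same label; (2) $\pi(f)=\pi(\Psi(f))$; (3) $\pi(f)=\pi(f')$ if and only if $\Psi(f)=\Psi(f')$.
   Context: Trees over $\Sigma$ are $\alpha[C]$ with $\alpha\in\Sigma$ and $C$ a finite set of trees (order and multiplicity of children ignored). Forests are finite sets of trees, with union written $+$. For a forest $f$, $\pi(f)\subseteq\Sigma^*$ is the set of (not necessarily maximal) label paths starting at a root, including the empty word. The map $\Psi:H_\Sigma\to H_\Sigma$ is defined recursively as follows. Write $f=\beta_1[f_1]+\dots+\beta_n[f_n]$ ($n\ge 0$), where $\beta_i\in\Sigma$ and the $f_i$ are forests. For each $\beta\in\{\beta_1,\dots,\beta_n\}$ let $F_\beta=\{f_i:\beta_i=\beta\}$. Then $$\Psi(f)=\sum_{\beta\in\{\beta_1,\dots,\beta_n\}}\beta\Big[\Psi\Big(\sum_{f'\in F_\beta}f'\Big)\Big].$$ *)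

theory Defs
  imports "HOL-Library.FSet"
begin

datatype 'a tree = Node (label: 'a) (children: "'a tree fset")

type_synonym 'a forest = "'a tree fset"

text \<open>Height of a tree / forest (used only to justify termination of Psi).\<close>
primrec theight :: "'a tree \<Rightarrow> nat" where
  "theight (Node a C) = Suc (fMax (finsert 0 (fimage theight C)))"

definition fheight :: "'a forest \<Rightarrow> nat" where
  "fheight f = fMax (finsert 0 (fimage theight f))"

text \<open>Label paths starting at a root (not necessarily maximal), including the empty word.\<close>
inductive is_path :: "'a forest \<Rightarrow> 'a list \<Rightarrow> bool" where
  nil: "is_path f []"
| cons: "Node a C |\<in>| f \<Longrightarrow> is_path C w \<Longrightarrow> is_path f (a # w)"

definition paths :: "'a forest \<Rightarrow> 'a list set" ("\<pi>") where
  "\<pi> f = {w. is_path f w}"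

inductive sibling_set :: "'a forest \<Rightarrow> 'a forest \<Rightarrow> bool" where
  root: "sibling_set f f"
| sub: "sibling_set f g \<Longrightarrow> Node a C |\<in>| g \<Longrightarrow> sibling_set f C"

definition siblings_distinct_labels :: "'a forest \<Rightarrow> bool" where
  "siblings_distinct_labels f \<longleftrightarrow>
     (\<forall>g. sibling_set f g \<longrightarrow> (\<forall>t t'. t |\<in>| g \<longrightarrow> t' |\<in>| g \<longrightarrow> t \<noteq> t' \<longrightarrow> label t \<noteq> label t'))"

definition merge_children :: "'a forest \<Rightarrow> 'a \<Rightarrow> 'a forest" where
  "merge_children f \<beta> = ffUnion (fimage children (ffilter (\<lambda>t. label t = \<beta>) f))"

lemma fheight_merge_children_less:
  assumes "\<beta> |\<in>| fimage label f"
  shows "fheight (merge_children f \<beta>) < fheight f"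
proof -
  have le: "theight u < theight t" if "u |\<in>| children t" for u t :: "'a tree"
  proof (cases t)
    case (Node a C)
    then have "theight u \<le> fMax (finsert 0 (fimage theight C))"
      using that by (metis fMax_ge finsertCI fimageI tree.sel(2))
    then show ?thesis using Node by simp
  qed
  have ge: "theight t \<le> fheight f" if "t |\<in>| f" for t
    unfolding fheight_def using that by (meson fMax_ge finsertCI fimageI)
  obtain t0 where t0: "t0 |\<in>| f" using assms by auto
  have pos: "0 < fheight f" using ge[OF t0] by (cases t0) auto
  have lt: "theight u < fheight f" if "u |\<in>| merge_children f \<beta>" for u
  proof -
    from that obtain t where "t |\<in>| f" "u |\<in>| children t"
      unfolding merge_children_def by (auto simp: ffUnion.rep_eq)
    then show ?thesis using le ge by (meson less_le_trans)
  qed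
  have "fMax (finsert 0 (fimage theight (merge_children f \<beta>))) |\<in>| finsert 0 (fimage theight (merge_children f \<beta>))"
    by (rule fMax_in) simp
  then have "fMax (finsert 0 (fimage theight (merge_children f \<beta>))) = 0 \<or>
    (\<exists>u. u |\<in>| merge_children f \<beta> \<and> fMax (finsert 0 (fimage theight (merge_children f \<beta>))) = theight u)"
    by (metis fimageE finsertE)
  then show ?thesis unfolding fheight_def[of "merge_children f \<beta>"] using pos lt
    by metis
qed

function Psi :: "'a forest \<Rightarrow> 'a forest" ("\<Psi>") where
  "\<Psi> f = fimage (\<lambda>\<beta>. Node \<beta> (\<Psi> (merge_children f \<beta>))) (fimage label f)"
  by auto
termination
  by (relation "measure fheight") (auto intro: fheight_merge_children_less)

end

theory Submission imports Defs begin
declare Psi.simps[simp del]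
lemma mem_ffUnion: "u |\<in>| ffUnion A \<longleftrightarrow> (\<exists>X. X |\<in>| A \<and> u |\<in>| X)"
  including fset.lifting by transfer blast
lemma mem_merge: "u |\<in>| merge_children f b \<longleftrightarrow> (\<exists>C. Node b C |\<in>| f \<and> u |\<in>| C)"
proof
  assume "u |\<in>| merge_children f b"
  then obtain t where "t |\<in>| f" "label t = b" "u |\<in>| children t"
    unfolding merge_children_def mem_ffUnion by auto
  then show "\<exists>C. Node b C |\<in>| f \<and> u |\<in>| C" by (metis tree.collapse)
next
  assume "\<exists>C. Node b C |\<in>| f \<and> u |\<in>| C"
  then obtain C where C: "Node b C |\<in>| f" "u |\<in>| C" by blast
  have "C |\<in>| fimage children (ffilter (\<lambda>t. label t = b) f)"
  proof -
    have "Node b C |\<in>| ffilter (\<lambda>t. label t = b) f" using C(1) by simp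
    then have "children (Node b C) |\<in>| fimage children (ffilter (\<lambda>t. label t = b) f)" by (rule fimageI)
    then show ?thesis by simp
  qed
  then show "u |\<in>| merge_children f b"
    unfolding merge_children_def mem_ffUnion using C(2) by blast
qed
lemma path_cons_iff: "is_path f (a # w) \<longleftrightarrow> (\<exists>C. Node a C |\<in>| f \<and> is_path C w)"
proof
  assume "is_path f (a # w)" then show "\<exists>C. Node a C |\<in>| f \<and> is_path C w"
  proof cases
    case (cons C) then show ?thesis by blast
  qed
next
  assume "\<exists>C. Node a C |\<in>| f \<and> is_path C w" then show "is_path f (a # w)"
    by (elim exE conjE) (rule is_path.cons)
qed

lemma label_mem: "a |\<in>| fimage label f \<longleftrightarrow> (\<exists>C. Node a C |\<in>| f)"
  by (metis fimage_iff tree.collapse tree.sel(1))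

lemma path_merge: "is_path f (a # w) \<longleftrightarrow> a |\<in>| fimage label f \<and> is_path (merge_children f a) w"
proof (cases w)
  case Nil
  then show ?thesis unfolding path_cons_iff label_mem using is_path.nil by blast
next
  case (Cons b v)
  show ?thesis unfolding Cons path_cons_iff mem_merge label_mem by blast
qed

lemma mem_Psi: "t |\<in>| \<Psi> f \<longleftrightarrow> (\<exists>b. b |\<in>| fimage label f \<and> t = Node b (\<Psi> (merge_children f b)))"
  by (subst Psi.simps) (simp only: fimage_iff, blast)

lemma node_Psi: "Node a C |\<in>| \<Psi> f \<longleftrightarrow> a |\<in>| fimage label f \<and> C = \<Psi> (merge_children f a)"
  unfolding mem_Psi by blast

lemma path_Psi: "is_path (\<Psi> f) w \<longleftrightarrow> is_path f w"
proof (induction w arbitrary: f)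
  case Nil
  then show ?case using is_path.nil by blast
next
  case (Cons a w)
  show ?case unfolding path_cons_iff[of "\<Psi> f"] node_Psi path_merge[of f]
    using Cons.IH[of "merge_children f a"] by blast
qed

lemma sib_Psi0: "sibling_set F g \<Longrightarrow> \<exists>h. F = \<Psi> h \<Longrightarrow> \<exists>h. g = \<Psi> h"
proof (induction rule: sibling_set.induct)
  case (root f)
  then show ?case by assumption
next
  case (sub f g a C)
  from sub.IH[OF sub.prems] obtain h where "g = \<Psi> h" by (elim exE)
  then have "Node a C |\<in>| \<Psi> h" using sub.hyps(2) by simp
  then have "C = \<Psi> (merge_children h a)" unfolding node_Psi by (elim conjE)
  then show ?case by (rule exI)
qed

lemma sib_Psi: "sibling_set (\<Psi> f) g \<Longrightarrow> \<exists>h. g = \<Psi> h"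
  using sib_Psi0 by blast

lemma distinct_Psi: "siblings_distinct_labels (\<Psi> f)"
  unfolding siblings_distinct_labels_def
proof (intro allI impI)
  fix g t t' assume "sibling_set (\<Psi> f) g" "t |\<in>| g" "t' |\<in>| g" "t \<noteq> t'"
  then obtain h where "g = \<Psi> h" using sib_Psi by blast
  then have "t |\<in>| \<Psi> h" "t' |\<in>| \<Psi> h" using \<open>t |\<in>| g\<close> \<open>t' |\<in>| g\<close> by simp_all
  then obtain b b' where "t = Node b (\<Psi> (merge_children h b))" "t' = Node b' (\<Psi> (merge_children h b'))"
    unfolding mem_Psi by blast
  then show "label t \<noteq> label t'" using \<open>t \<noteq> t'\<close> by auto
qed

lemma labels_paths: "a |\<in>| fimage label f \<longleftrightarrow> [a] \<in> \<pi> f"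
  unfolding paths_def using path_merge[of f a "[]"] is_path.nil by blast

lemma inj_Psi: "\<pi> f = \<pi> f' \<Longrightarrow> \<Psi> f = \<Psi> f'"
proof (induction f arbitrary: f' rule: Psi.induct)
  case (1 f)
  have L: "fimage label f = fimage label f'"
    using 1(2) labels_paths by (metis fset_eqI)
  have M: "\<Psi> (merge_children f b) = \<Psi> (merge_children f' b)" if "b |\<in>| fimage label f" for b
  proof (rule 1(1))
    show "b \<in> fset (fimage label f)" using that by simp
    show "\<pi> (merge_children f b) = \<pi> (merge_children f' b)"
      using 1(2) that L unfolding paths_def set_eq_iff mem_Collect_eq by (metis path_merge)
  qed
  show ?case
    apply (subst (1 2) Psi.simps)
    unfolding L[symmetric] using M by (intro fimage_cong) auto
qed

theorem mainTheorem6: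
  fixes f f' :: "('a::finite) forest"
  shows "siblings_distinct_labels (\<Psi> f) \<and> \<pi> f = \<pi> (\<Psi> f) \<and> (\<pi> f = \<pi> f' \<longleftrightarrow> \<Psi> f = \<Psi> f')"
proof -
  have P: "\<pi> g = \<pi> (\<Psi> g)" for g :: "'a forest" unfolding paths_def path_Psi ..
  show ?thesis using distinct_Psi P inj_Psi by metis
qed

end
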